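(* Let $p\in[1,+\infty]$, let $\tilde\Lambda\colon\mathbb{R}^n\to\mathbb{R}$ be an aggregation function and define $\Lambda\colon L^p(\mathbb{R}^n)\to L^p(\mathbb{R})$ by $\Lambda(X)(\omega)=\tilde\Lambda(X(\omega))$. (i) If $\tilde\Lambda$ is concave and bounded from above, then $\Lambda$ is concave and lower demicontinuous. (ii) If $\tilde\Lambda$ is linear, then $\Lambda$ is linear and lower demicontinuous. (iii) If $\tilde\Lambda$ is regularly increasing, then $\Lambda$ is regularly increasing.
   Context: $(\Omega,\mathcal{F},\mathbb{P})$ probability space; $\frac1p+\frac1q=1$; $L^p(A)$: $A$-valued random vectors with finite $p$-norm (a.s. classes). $L^p(\mathbb{R}^n)$, $L^p(\mathbb{R})$ carry the norm topology if $p<\infty$ and the weak$^\ast$ topology $\sigma(L^\infty,L^1)$ if $p=\infty$; their duals are $L^q(\mathbb{R}^n)$, $L^q(\mathbb{R})$ via $\mathbb{E}[(X^\ast)^{\mathsf T}X]$. Cones $C=L^p(\mathbb{R}^n_+)$, $D=L^p(\mathbb{R}_+)$, with $C^{\#}=\{X\in C:\mathbb{E}[(X^\ast)^{\mathsf T}X]>0\ \forall X^\ast\in L^q(\mathbb{R}^n_+)\setminus\{0\}\}$ and $D^{\#}$ analogously. An aggregation function is an increasing $\tilde\Lambda\colon\mathbb{R}^n\to\mathbb{R}$ ($x\le y$ componentwise implies $\tilde\Lambda(x)\le\tilde\Lambda(y)$) such that $\tilde\Lambda\circ X\in L^p(\mathbb{R})$ for all $X\in L^p(\mathbb{R}^n)$.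 $\tilde\Lambda$ is regularly increasing if it is increasing and $x_i<y_i$ for all $i$ implies $\tilde\Lambda(x)<\tilde\Lambda(y)$. $\Lambda$ is concave if $\Lambda(\lambda X_1+(1-\lambda)X_2)\ge\lambda\Lambda(X_1)+(1-\lambda)\Lambda(X_2)$ a.s. for $\lambda\in(0,1)$. $\Lambda$ is lower demicontinuous if for every open halfspace $M=\{Y\in L^p(\mathbb{R}):\mathbb{E}[Y^\ast Y]>c\}$ ($Y^\ast\in L^q(\mathbb{R})\setminus\{0\}$, $c\in\mathbb{R}$) the set $\{X\in L^p(\mathbb{R}^n):(\Lambda(X)+L^p(\mathbb{R}_+))\cap M\ne\emptyset\}$ is open. $\Lambda$ is regularly increasing if $X_2-X_1\in C$ implies $\Lambda(X_2)-\Lambda(X_1)\in D$, and $X_2-X_1\in C^{\#}$ implies $\Lambda(X_2)-\Lambda(X_1)\in D^{\#}$. *)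

theory Defs
  imports "HOL-Probability.Probability"
begin

text \<open>Random vectors are measurable functions on the probability space M;
  a.s.-classes are handled by stating all identities/inequalities almost surely.\<close>

definition memLp :: "'a measure \<Rightarrow> ennreal \<Rightarrow> ('a \<Rightarrow> 'b::euclidean_space) \<Rightarrow> bool" where
  "memLp M p X \<longleftrightarrow> X \<in> borel_measurable M \<and>
     (if p = \<infinity> then (\<exists>C. AE \<omega> in M. norm (X \<omega>) \<le> C)
      else integrable M (\<lambda>\<omega>. norm (X \<omega>) powr enn2real p))"

text \<open>L^p norm for finite p.\<close>
definition Lpnorm :: "'a measure \<Rightarrow> ennreal \<Rightarrow> ('a \<Rightarrow> 'b::euclidean_space) \<Rightarrow> real" where
  "Lpnorm M p X = (\<integral>\<omega>. norm (X \<omega>) powr enn2real p \<partial>M) powr (1 / enn2real p)"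

definition conj_exp :: "ennreal \<Rightarrow> ennreal" where
  "conj_exp p = (if p = 1 then \<infinity> else if p = \<infinity> then 1
                 else ennreal (enn2real p / (enn2real p - 1)))"

definition pairing :: "'a measure \<Rightarrow> ('a \<Rightarrow> 'b::euclidean_space) \<Rightarrow> ('a \<Rightarrow> 'b) \<Rightarrow> real" where
  "pairing M Z X = (\<integral>\<omega>. Z \<omega> \<bullet> X \<omega> \<partial>M)"

text \<open>Open sets of L^p: norm topology for finite p, weak* topology sigma(L^infty, L^1)
  for p = infinity (via the basic neighbourhoods determined by finitely many L^1 elements).\<close>
definition Lp_open :: "'a measure \<Rightarrow> ennreal \<Rightarrow> ('a \<Rightarrow> 'b::euclidean_space) set \<Rightarrow> bool" where
  "Lp_open M p S \<longleftrightarrow> S \<subseteq> {X. memLp M p X} \<and>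
     (\<forall>X\<in>S. if p = \<infinity> then
        (\<exists>Zs :: ('a \<Rightarrow> 'b) list. \<exists>\<epsilon>>0. (\<forall>Z\<in>set Zs. memLp M 1 Z) \<and>
           {Y. memLp M \<infinity> Y \<and> (\<forall>Z\<in>set Zs. \<bar>pairing M Z (\<lambda>\<omega>. Y \<omega> - X \<omega>)\<bar> < \<epsilon>)} \<subseteq> S)
      else (\<exists>\<epsilon>>0. {Y. memLp M p Y \<and> Lpnorm M p (\<lambda>\<omega>. Y \<omega> - X \<omega>) < \<epsilon>} \<subseteq> S))"

text \<open>Cones C = L^p(R^n_+), D = L^p(R_+) and their quasi-interiors C#, D#.\<close>
definition Lp_cone :: "'a measure \<Rightarrow> ennreal \<Rightarrow> ('a \<Rightarrow> 'b::{euclidean_space,ord}) set" where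
  "Lp_cone M p = {X. memLp M p X \<and> (AE \<omega> in M. 0 \<le> X \<omega>)}"

definition Lp_cone_sharp :: "'a measure \<Rightarrow> ennreal \<Rightarrow> ('a \<Rightarrow> 'b::{euclidean_space,ord}) set" where
  "Lp_cone_sharp M p = {X \<in> Lp_cone M p.
     \<forall>Z \<in> Lp_cone M (conj_exp p). \<not> (AE \<omega> in M. Z \<omega> = 0) \<longrightarrow> pairing M Z X > 0}"

definition aggregation_function :: "'a measure \<Rightarrow> ennreal \<Rightarrow> (real^'n \<Rightarrow> real) \<Rightarrow> bool" where
  "aggregation_function M p f \<longleftrightarrow> (\<forall>x y. x \<le> y \<longrightarrow> f x \<le> f y) \<and>
     (\<forall>X. memLp M p X \<longrightarrow> memLp M p (\<lambda>\<omega>. f (X \<omega>)))"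

definition regularly_increasing_fun :: "(real^'n \<Rightarrow> real) \<Rightarrow> bool" where
  "regularly_increasing_fun f \<longleftrightarrow> (\<forall>x y. x \<le> y \<longrightarrow> f x \<le> f y) \<and>
     (\<forall>x y. (\<forall>i. x $ i < y $ i) \<longrightarrow> f x < f y)"

definition induced :: "(real^'n \<Rightarrow> real) \<Rightarrow> ('a \<Rightarrow> real^'n) \<Rightarrow> ('a \<Rightarrow> real)" where
  "induced f X = (\<lambda>\<omega>. f (X \<omega>))"

definition Lp_concave :: "'a measure \<Rightarrow> ennreal \<Rightarrow> (('a \<Rightarrow> real^'n) \<Rightarrow> ('a \<Rightarrow> real)) \<Rightarrow> bool" where
  "Lp_concave M p L \<longleftrightarrow> (\<forall>X1 X2 (t::real). memLp M p X1 \<and> memLp M p X2 \<and> 0 < t \<and> t < 1 \<longrightarrow>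
     (AE \<omega> in M. L (\<lambda>\<omega>'. t *\<^sub>R X1 \<omega>' + (1 - t) *\<^sub>R X2 \<omega>') \<omega> \<ge> t * L X1 \<omega> + (1 - t) * L X2 \<omega>))"

definition Lp_linear :: "'a measure \<Rightarrow> ennreal \<Rightarrow> (('a \<Rightarrow> real^'n) \<Rightarrow> ('a \<Rightarrow> real)) \<Rightarrow> bool" where
  "Lp_linear M p L \<longleftrightarrow> (\<forall>X1 X2 (a::real) (b::real). memLp M p X1 \<and> memLp M p X2 \<longrightarrow>
     (AE \<omega> in M. L (\<lambda>\<omega>'. a *\<^sub>R X1 \<omega>' + b *\<^sub>R X2 \<omega>') \<omega> = a * L X1 \<omega> + b * L X2 \<omega>))"

definition Lp_lower_demicontinuous ::
  "'a measure \<Rightarrow> ennreal \<Rightarrow> (('a \<Rightarrow> real^'n) \<Rightarrow> ('a \<Rightarrow> real)) \<Rightarrow> bool" where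
  "Lp_lower_demicontinuous M p L \<longleftrightarrow>
     (\<forall>(Ys :: 'a \<Rightarrow> real) (c::real). memLp M (conj_exp p) Ys \<and> \<not> (AE \<omega> in M. Ys \<omega> = 0) \<longrightarrow>
        Lp_open M p {X. memLp M p X \<and>
          (\<exists>D \<in> Lp_cone M p. pairing M Ys (\<lambda>\<omega>. L X \<omega> + D \<omega>) > c)})"

definition Lp_regularly_increasing ::
  "'a measure \<Rightarrow> ennreal \<Rightarrow> (('a \<Rightarrow> real^'n) \<Rightarrow> ('a \<Rightarrow> real)) \<Rightarrow> bool" where
  "Lp_regularly_increasing M p L \<longleftrightarrow> (\<forall>X1 X2. memLp M p X1 \<and> memLp M p X2 \<longrightarrow>
     ((\<lambda>\<omega>. X2 \<omega> - X1 \<omega>) \<in> Lp_cone M p \<longrightarrow> (\<lambda>\<omega>. L X2 \<omega> - L X1 \<omega>) \<in> Lp_cone M p) \<and>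
     ((\<lambda>\<omega>. X2 \<omega> - X1 \<omega>) \<in> Lp_cone_sharp M p \<longrightarrow> (\<lambda>\<omega>. L X2 \<omega> - L X1 \<omega>) \<in> Lp_cone_sharp M p))"

end

theory Submission
  imports Defs
begin

lemma memLp_measurable: "memLp M p X \<Longrightarrow> X \<in> borel_measurable M"
  by (simp add: memLp_def)

lemma P_ge1: "1 \<le> p \<Longrightarrow> p \<noteq> \<infinity> \<Longrightarrow> 1 \<le> enn2real p"
  by (metis enn2real_1 enn2real_mono infinity_ennreal_def top.not_eq_extremum)

lemma conj_exp_cases:
  assumes "1 \<le> p"
  shows "(p = 1 \<and> conj_exp p = \<infinity>) \<or> (p = \<infinity> \<and> conj_exp p = 1) \<or>
    (p \<noteq> \<infinity> \<and> p \<noteq> 1 \<and> conj_exp p \<noteq> \<infinity> \<and> 1 < enn2real p \<and> 1 < enn2real (conj_exp p) \<and>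
     1 / enn2real p + 1 / enn2real (conj_exp p) = 1)"
proof -
  consider "p = 1" | "p = \<infinity>" | "p \<noteq> 1" "p \<noteq> \<infinity>" by blast
  thus ?thesis
  proof cases
    case 3
    let ?P = "enn2real p"
    have pe: "p = ennreal ?P" using 3 by (simp add: ennreal_enn2real_if)
    have "?P \<noteq> 1" using 3(1) by (metis pe ennreal_1)
    hence P1: "1 < ?P" using P_ge1[OF assms 3(2)] by linarith
    have ce: "conj_exp p = ennreal (?P / (?P - 1))" using 3 by (simp add: conj_exp_def)
    have Q: "enn2real (conj_exp p) = ?P / (?P - 1)" using ce P1 by simp
    have "1 / ?P + 1 / (?P / (?P - 1)) = 1" using P1 by (simp add: field_simps)
    thus ?thesis using 3 P1 Q ce by simp
  qed (auto simp: conj_exp_def)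
qed

lemma conj_exp_ge1: "1 \<le> p \<Longrightarrow> 1 \<le> conj_exp p"
proof -
  assume p: "1 \<le> p"
  consider "p = 1" | "p = \<infinity>" | "p \<noteq> 1" "p \<noteq> \<infinity>" by blast
  thus ?thesis
  proof cases
    case 3
    hence "1 < enn2real (conj_exp p)" "conj_exp p \<noteq> \<infinity>" using conj_exp_cases[OF p] by auto
    thus ?thesis by (smt (verit, best) enn2real_leI ennreal_1 linorder_linear)
  qed (auto simp: conj_exp_def)
qed

context prob_space begin

lemma memLp_bounded:
  fixes X :: "'a \<Rightarrow> 'b::euclidean_space"
  assumes "X \<in> borel_measurable M" "AE \<omega> in M. norm (X \<omega>) \<le> C"
  shows "memLp M p X"
proof (cases "p = \<infinity>")
  case True thus ?thesis using assms by (auto simp: memLp_def)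
next
  case False
  have fi: "integrable M (\<lambda>_. (max C 0) powr enn2real p)" by simp
  have "integrable M (\<lambda>\<omega>. norm (X \<omega>) powr enn2real p)"
  proof (rule Bochner_Integration.integrable_bound[OF fi])
    show "(\<lambda>\<omega>. norm (X \<omega>) powr enn2real p) \<in> borel_measurable M" using assms(1) by measurable
    show "AE \<omega> in M. norm (norm (X \<omega>) powr enn2real p) \<le> norm (max C 0 powr enn2real p)"
      using assms(2) by eventually_elim (auto intro!: powr_mono2)
  qed
  thus ?thesis using False assms by (simp add: memLp_def)
qed

lemma memLp_mono:
  fixes X :: "'a \<Rightarrow> 'b::euclidean_space" and Y :: "'a \<Rightarrow> 'c::euclidean_space"
  assumes "memLp M p X" "Y \<in> borel_measurable M" "AE \<omega> in M. norm (Y \<omega>) \<le> norm (X \<omega>)"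
  shows "memLp M p Y"
proof (cases "p = \<infinity>")
  case True
  then obtain C where "AE \<omega> in M. norm (X \<omega>) \<le> C" using assms by (auto simp: memLp_def)
  with assms(3) have "AE \<omega> in M. norm (Y \<omega>) \<le> C" by eventually_elim auto
  thus ?thesis using assms(2) memLp_bounded by blast
next
  case False
  have fi: "integrable M (\<lambda>\<omega>. norm (X \<omega>) powr enn2real p)" using assms False by (simp add: memLp_def)
  have "integrable M (\<lambda>\<omega>. norm (Y \<omega>) powr enn2real p)"
  proof (rule Bochner_Integration.integrable_bound[OF fi])
    show "(\<lambda>\<omega>. norm (Y \<omega>) powr enn2real p) \<in> borel_measurable M" using assms(2) by measurable
    show "AE \<omega> in M. norm (norm (Y \<omega>) powr enn2real p) \<le> norm (norm (X \<omega>) powr enn2real p)"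
      using assms(3) by eventually_elim (auto intro!: powr_mono2)
  qed
  thus ?thesis using False assms by (simp add: memLp_def)
qed

lemma powr_sum_bound:
  fixes x a b P :: real
  assumes "0 \<le> x" "0 \<le> a" "0 \<le> b" "x \<le> a + b" "0 \<le> P"
  shows "x powr P \<le> 2 powr P * (a powr P + b powr P)"
proof -
  have "x \<le> 2 * max a b" using assms by linarith
  hence "x powr P \<le> (2 * max a b) powr P" using assms by (intro powr_mono2) auto
  also have "\<dots> = 2 powr P * max a b powr P" using assms by (simp add: powr_mult)
  also have "max a b powr P \<le> a powr P + b powr P"
    by (cases "a \<le> b") (auto simp: max_def)
  hence "2 powr P * max a b powr P \<le> 2 powr P * (a powr P + b powr P)" by simp
  finally show ?thesis .
qed

lemma memLp_bound2:
  fixes X Y :: "'a \<Rightarrow> 'b::euclidean_space" and Z :: "'a \<Rightarrow> 'c::euclidean_space"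
  assumes "memLp M p X" "memLp M p Y" "Z \<in> borel_measurable M"
    "AE \<omega> in M. norm (Z \<omega>) \<le> norm (X \<omega>) + norm (Y \<omega>)"
  shows "memLp M p Z"
proof (cases "p = \<infinity>")
  case True
  then obtain C1 C2 where "AE \<omega> in M. norm (X \<omega>) \<le> C1" "AE \<omega> in M. norm (Y \<omega>) \<le> C2"
    using assms by (auto simp: memLp_def)
  with assms(4) have "AE \<omega> in M. norm (Z \<omega>) \<le> C1 + C2" by eventually_elim auto
  thus ?thesis using assms(3) memLp_bounded by blast
next
  case False
  let ?P = "enn2real p"
  have fi: "integrable M (\<lambda>\<omega>. 2 powr ?P * (norm (X \<omega>) powr ?P + norm (Y \<omega>) powr ?P))"
    using assms False by (simp add: memLp_def)
  have "integrable M (\<lambda>\<omega>. norm (Z \<omega>) powr ?P)"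
  proof (rule Bochner_Integration.integrable_bound[OF fi])
    show "(\<lambda>\<omega>. norm (Z \<omega>) powr ?P) \<in> borel_measurable M" using assms(3) by measurable
    show "AE \<omega> in M. norm (norm (Z \<omega>) powr ?P) \<le> norm (2 powr ?P * (norm (X \<omega>) powr ?P + norm (Y \<omega>) powr ?P))"
      using assms(4)
    proof eventually_elim
      case (elim \<omega>)
      have "norm (Z \<omega>) powr ?P \<le> 2 powr ?P * (norm (X \<omega>) powr ?P + norm (Y \<omega>) powr ?P)"
        using elim by (intro powr_sum_bound) auto
      thus ?case by simp
    qed
  qed
  thus ?thesis using False assms by (simp add: memLp_def)
qed

lemma memLp_diff:
  fixes X Y :: "'a \<Rightarrow> 'b::euclidean_space"
  assumes "memLp M p X" "memLp M p Y"
  shows "memLp M p (\<lambda>\<omega>. X \<omega> - Y \<omega>)"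
  using assms by (intro memLp_bound2[OF assms]) (auto simp: memLp_def norm_triangle_ineq4)

lemma memLp_add:
  fixes X Y :: "'a \<Rightarrow> 'b::euclidean_space"
  assumes "memLp M p X" "memLp M p Y"
  shows "memLp M p (\<lambda>\<omega>. X \<omega> + Y \<omega>)"
  using assms by (intro memLp_bound2[OF assms]) (auto simp: memLp_def norm_triangle_ineq)

lemma memLp_norm:
  fixes X :: "'a \<Rightarrow> 'b::euclidean_space"
  assumes "memLp M p X"
  shows "memLp M p (\<lambda>\<omega>. norm (X \<omega>))"
  using assms by (intro memLp_mono[OF assms]) (auto simp: memLp_def)

lemma memLp_integrable:
  fixes X :: "'a \<Rightarrow> 'b::euclidean_space"
  assumes "1 \<le> p" "memLp M p X"
  shows "integrable M X"
proof (cases "p = \<infinity>")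
  case True
  then obtain C where "AE \<omega> in M. norm (X \<omega>) \<le> C" using assms by (auto simp: memLp_def)
  thus ?thesis using assms by (intro integrable_const_bound) (auto simp: memLp_def)
next
  case False
  let ?P = "enn2real p"
  have P1: "1 \<le> ?P" using assms False
    by (metis enn2real_1 enn2real_mono infinity_ennreal_def top.not_eq_extremum)
  have fi: "integrable M (\<lambda>\<omega>. 1 + norm (X \<omega>) powr ?P)"
    using assms False by (simp add: memLp_def)
  show ?thesis
  proof (rule Bochner_Integration.integrable_bound[OF fi])
    show "X \<in> borel_measurable M" using assms by (simp add: memLp_def)
    have "norm (X \<omega>) \<le> 1 + norm (X \<omega>) powr ?P" for \<omega>
    proof (cases "norm (X \<omega>) \<le> 1")
      case True thus ?thesis by (smt (verit) powr_ge_zero)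
    next
      case False
      hence "norm (X \<omega>) powr 1 \<le> norm (X \<omega>) powr ?P" using P1 by (intro powr_mono) auto
      thus ?thesis by simp
    qed
    thus "AE \<omega> in M. norm (X \<omega>) \<le> norm (1 + norm (X \<omega>) powr ?P)" by auto
  qed
qed

lemma holder_integrable:
  fixes z g :: "'a \<Rightarrow> real"
  assumes p: "1 \<le> p" and z: "memLp M (conj_exp p) z" and g: "memLp M p g"
  shows "integrable M (\<lambda>\<omega>. z \<omega> * g \<omega>)"
proof -
  have zm: "z \<in> borel_measurable M" and gm: "g \<in> borel_measurable M"
    using z g by (auto simp: memLp_def)
  consider "p = 1 \<and> conj_exp p = \<infinity>" | "p = \<infinity> \<and> conj_exp p = 1" |
    "p \<noteq> \<infinity> \<and> p \<noteq> 1 \<and> conj_exp p \<noteq> \<infinity> \<and> 1 < enn2real p \<and> 1 < enn2real (conj_exp p) \<and>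
     1 / enn2real p + 1 / enn2real (conj_exp p) = 1"
    using conj_exp_cases[OF p] by blast
  thus ?thesis
  proof cases
    case 1
    then obtain C where C: "AE \<omega> in M. norm (z \<omega>) \<le> C" using z by (auto simp: memLp_def)
    have gi: "integrable M g" using memLp_integrable[OF p g] .
    have fi: "integrable M (\<lambda>\<omega>. \<bar>C\<bar> * g \<omega>)" using gi by simp
    show ?thesis
    proof (rule Bochner_Integration.integrable_bound[OF fi])
      show "(\<lambda>\<omega>. z \<omega> * g \<omega>) \<in> borel_measurable M" using zm gm by measurable
      show "AE \<omega> in M. norm (z \<omega> * g \<omega>) \<le> norm (\<bar>C\<bar> * g \<omega>)"
        using C by eventually_elim (simp add: abs_mult mult_right_mono)
    qed
  next
    case 2
    then obtain C where C: "AE \<omega> in M. norm (g \<omega>) \<le> C" using g by (auto simp: memLp_def)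
    have zi: "integrable M z" using memLp_integrable[OF conj_exp_ge1[OF p] z] .
    have fi: "integrable M (\<lambda>\<omega>. \<bar>C\<bar> * z \<omega>)" using zi by simp
    show ?thesis
    proof (rule Bochner_Integration.integrable_bound[OF fi])
      show "(\<lambda>\<omega>. z \<omega> * g \<omega>) \<in> borel_measurable M" using zm gm by measurable
      show "AE \<omega> in M. norm (z \<omega> * g \<omega>) \<le> norm (\<bar>C\<bar> * z \<omega>)"
        using C by eventually_elim (simp add: abs_mult mult_right_mono mult.commute)
    qed
  next
    case 3
    let ?P = "enn2real p" and ?Q = "enn2real (conj_exp p)"
    have zi: "integrable M (\<lambda>\<omega>. norm (z \<omega>) powr ?Q)" using z 3 by (simp add: memLp_def)
    have gi: "integrable M (\<lambda>\<omega>. norm (g \<omega>) powr ?P)" using g 3 by (simp add: memLp_def)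
    have fi: "integrable M (\<lambda>\<omega>. norm (g \<omega>) powr ?P / ?P + norm (z \<omega>) powr ?Q / ?Q)"
      by (intro Bochner_Integration.integrable_add integrable_divide_zero gi zi)
    show ?thesis
    proof (rule Bochner_Integration.integrable_bound[OF fi])
      show "(\<lambda>\<omega>. z \<omega> * g \<omega>) \<in> borel_measurable M" using zm gm by measurable
      have P1: "1 < ?P" "1 < ?Q" "1 / ?P + 1 / ?Q = 1" using 3 by auto
      have y: "\<bar>g \<omega>\<bar> * \<bar>z \<omega>\<bar> \<le> \<bar>g \<omega>\<bar> powr ?P / ?P + \<bar>z \<omega>\<bar> powr ?Q / ?Q" for \<omega>
        by (rule Youngs_inequality[OF P1]) auto
      have nn: "0 \<le> \<bar>g \<omega>\<bar> powr ?P / ?P + \<bar>z \<omega>\<bar> powr ?Q / ?Q" for \<omega>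
        using P1 by (intro add_nonneg_nonneg divide_nonneg_nonneg) auto
      have "norm (z \<omega> * g \<omega>) \<le> norm (norm (g \<omega>) powr ?P / ?P + norm (z \<omega>) powr ?Q / ?Q)" for \<omega>
      proof -
        have e1: "norm (z \<omega> * g \<omega>) = \<bar>g \<omega>\<bar> * \<bar>z \<omega>\<bar>" by (simp add: abs_mult)
        have e2: "norm (norm (g \<omega>) powr ?P / ?P + norm (z \<omega>) powr ?Q / ?Q) =
           \<bar>g \<omega>\<bar> powr ?P / ?P + \<bar>z \<omega>\<bar> powr ?Q / ?Q"
          using nn[of \<omega>] by (metis real_norm_def abs_of_nonneg)
        show ?thesis unfolding e1 e2 by (rule y)
      qed
      thus "AE \<omega> in M. norm (z \<omega> * g \<omega>) \<le> norm (norm (g \<omega>) powr ?P / ?P + norm (z \<omega>) powr ?Q / ?Q)"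
        by simp
    qed
  qed
qed

end


lemma Lpnorm_lt_imp:
  fixes I P \<epsilon> :: real
  assumes "0 \<le> I" "1 \<le> P" "I powr (1 / P) < \<epsilon>"
  shows "I < \<epsilon> powr P"
proof -
  have "(I powr (1 / P)) powr P < \<epsilon> powr P"
    using assms by (intro powr_less_mono2) auto
  also have "(I powr (1 / P)) powr P = I" using assms by (simp add: powr_powr)
  finally show ?thesis .
qed

context prob_space begin

lemma holder_small:
  fixes z :: "'a \<Rightarrow> real"
  assumes p: "1 \<le> p" "p \<noteq> \<infinity>" and z: "memLp M (conj_exp p) z" and d: "0 < \<delta>"
  shows "\<exists>\<epsilon>>0. \<forall>h::'a \<Rightarrow> real. memLp M p h \<and> Lpnorm M p h < \<epsilon> \<longrightarrow> (\<integral>\<omega>. \<bar>z \<omega>\<bar> * \<bar>h \<omega>\<bar> \<partial>M) < \<delta>"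
proof -
  have zm: "z \<in> borel_measurable M" using z by (simp add: memLp_def)
  have za: "memLp M (conj_exp p) (\<lambda>\<omega>. \<bar>z \<omega>\<bar>)" using memLp_norm[OF z] by simp
  consider "p = 1 \<and> conj_exp p = \<infinity>" |
    "p \<noteq> \<infinity> \<and> p \<noteq> 1 \<and> conj_exp p \<noteq> \<infinity> \<and> 1 < enn2real p \<and> 1 < enn2real (conj_exp p) \<and>
     1 / enn2real p + 1 / enn2real (conj_exp p) = 1"
    using conj_exp_cases[OF p(1)] p(2) by blast
  thus ?thesis
  proof cases
    case 1
    then obtain C where C: "AE \<omega> in M. norm (z \<omega>) \<le> C" using z by (auto simp: memLp_def)
    define K where "K = max C 0 + 1"
    have K: "0 < K" unfolding K_def by simp
    show ?thesis
    proof (intro exI[of _ "\<delta> / K"] conjI allI impI)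
      show "0 < \<delta> / K" using K d by simp
      fix h :: "'a \<Rightarrow> real" assume h: "memLp M p h \<and> Lpnorm M p h < \<delta> / K"
      have ha: "memLp M p (\<lambda>\<omega>. \<bar>h \<omega>\<bar>)" using memLp_norm[of p h] h by simp
      have hi: "integrable M (\<lambda>\<omega>. \<bar>h \<omega>\<bar>)" using memLp_integrable[OF p(1) ha] .
      have ln: "Lpnorm M p h = (\<integral>\<omega>. \<bar>h \<omega>\<bar> \<partial>M)"
        using 1 by (simp add: Lpnorm_def)
      have "(\<integral>\<omega>. \<bar>z \<omega>\<bar> * \<bar>h \<omega>\<bar> \<partial>M) \<le> (\<integral>\<omega>. K * \<bar>h \<omega>\<bar> \<partial>M)"
      proof (rule integral_mono_AE)
        show "integrable M (\<lambda>\<omega>. \<bar>z \<omega>\<bar> * \<bar>h \<omega>\<bar>)" using holder_integrable[OF p(1) za ha] .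
        show "integrable M (\<lambda>\<omega>. K * \<bar>h \<omega>\<bar>)" using hi by simp
        show "AE \<omega> in M. \<bar>z \<omega>\<bar> * \<bar>h \<omega>\<bar> \<le> K * \<bar>h \<omega>\<bar>"
          using C by eventually_elim (auto simp: K_def intro!: mult_right_mono)
      qed
      also have "\<dots> = K * Lpnorm M p h" using ln by simp
      also have "\<dots> < K * (\<delta> / K)" using h K by (intro mult_strict_left_mono) auto
      also have "\<dots> = \<delta>" using K by simp
      finally show "(\<integral>\<omega>. \<bar>z \<omega>\<bar> * \<bar>h \<omega>\<bar> \<partial>M) < \<delta>" .
    qed
  next
    case 2
    define P where "P = enn2real p"
    define Q where "Q = enn2real (conj_exp p)"
    have PQ: "1 < P" "1 < Q" "1 / P + 1 / Q = 1" using 2 by (auto simp: P_def Q_def)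
    define A where "A = (\<integral>\<omega>. \<bar>z \<omega>\<bar> powr Q \<partial>M)"
    have A0: "0 \<le> A" unfolding A_def by (intro integral_nonneg_AE) auto
    have zi: "integrable M (\<lambda>\<omega>. \<bar>z \<omega>\<bar> powr Q)" using z 2 by (simp add: memLp_def Q_def)
    define l where "l = (2 * A / \<delta> + 1) powr (1 / Q)"
    have pos: "0 < 2 * A / \<delta> + 1" using A0 d by (intro add_nonneg_pos divide_nonneg_pos) auto
    have l0: "0 < l" unfolding l_def using pos by simp
    have lQ: "l powr Q = 2 * A / \<delta> + 1" unfolding l_def using pos PQ by (simp add: powr_powr)
    define K where "K = l powr P"
    have K0: "0 < K" unfolding K_def using l0 by simp
    show ?thesis
    proof (intro exI[of _ "(\<delta> / (2 * K)) powr (1 / P)"] conjI allI impI)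
      show "0 < (\<delta> / (2 * K)) powr (1 / P)" using d K0 by simp
      fix h :: "'a \<Rightarrow> real" assume h: "memLp M p h \<and> Lpnorm M p h < (\<delta> / (2 * K)) powr (1 / P)"
      have ha: "memLp M p (\<lambda>\<omega>. \<bar>h \<omega>\<bar>)" using memLp_norm[of p h] h by simp
      have hi: "integrable M (\<lambda>\<omega>. \<bar>h \<omega>\<bar> powr P)" using h 2 by (simp add: memLp_def P_def)
      define I where "I = (\<integral>\<omega>. \<bar>h \<omega>\<bar> powr P \<partial>M)"
      have I0: "0 \<le> I" unfolding I_def by (intro integral_nonneg_AE) auto
      have lt: "I powr (1 / P) < (\<delta> / (2 * K)) powr (1 / P)" using h by (simp add: Lpnorm_def I_def P_def)
      have P1: "1 \<le> P" using PQ by simp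
      have "I < ((\<delta> / (2 * K)) powr (1 / P)) powr P" by (rule Lpnorm_lt_imp[OF I0 P1 lt])
      also have "\<dots> = \<delta> / (2 * K)" using d K0 PQ by (simp add: powr_powr)
      finally have IL: "I < \<delta> / (2 * K)" .
      have pw: "\<bar>z \<omega>\<bar> * \<bar>h \<omega>\<bar> \<le> K / P * \<bar>h \<omega>\<bar> powr P + 1 / (l powr Q * Q) * \<bar>z \<omega>\<bar> powr Q" for \<omega>
      proof -
        have "(l * \<bar>h \<omega>\<bar>) * (\<bar>z \<omega>\<bar> / l) \<le> (l * \<bar>h \<omega>\<bar>) powr P / P + (\<bar>z \<omega>\<bar> / l) powr Q / Q"
          using PQ l0 by (intro Youngs_inequality) auto
        also have "(l * \<bar>h \<omega>\<bar>) powr P = K * \<bar>h \<omega>\<bar> powr P" using l0 by (simp add: powr_mult K_def)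
        also have "(\<bar>z \<omega>\<bar> / l) powr Q = \<bar>z \<omega>\<bar> powr Q / l powr Q" using l0 by (simp add: powr_divide)
        also have "(l * \<bar>h \<omega>\<bar>) * (\<bar>z \<omega>\<bar> / l) = \<bar>z \<omega>\<bar> * \<bar>h \<omega>\<bar>" using l0 by simp
        finally show ?thesis by simp
      qed
      have "(\<integral>\<omega>. \<bar>z \<omega>\<bar> * \<bar>h \<omega>\<bar> \<partial>M) \<le> (\<integral>\<omega>. K / P * \<bar>h \<omega>\<bar> powr P + 1 / (l powr Q * Q) * \<bar>z \<omega>\<bar> powr Q \<partial>M)"
      proof (rule integral_mono)
        show "integrable M (\<lambda>\<omega>. \<bar>z \<omega>\<bar> * \<bar>h \<omega>\<bar>)" using holder_integrable[OF p(1) za ha] .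
        show "integrable M (\<lambda>\<omega>. K / P * \<bar>h \<omega>\<bar> powr P + 1 / (l powr Q * Q) * \<bar>z \<omega>\<bar> powr Q)"
          using hi zi by simp
      qed (rule pw)
      also have "\<dots> = K / P * I + 1 / (l powr Q * Q) * A"
        using hi zi by (simp add: I_def A_def)
      also have "K / P * I \<le> K * I" proof -
        have "I \<le> I * P" using PQ I0 by (metis mult.right_neutral mult_left_mono less_imp_le)
        thus ?thesis using K0 PQ I0 by (simp add: divide_le_eq mult_le_cancel_left)
      qed
      also have "K * I < \<delta> / 2" using IL K0 by (simp add: field_simps)
      also have "1 / (l powr Q * Q) * A \<le> A / (2 * A / \<delta> + 1)"
      proof -
        have lp: "0 < l powr Q" using l0 by simp
        have "1 / (l powr Q * Q) * A = A / (l powr Q * Q)" by simp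
        also have "\<dots> \<le> A / (l powr Q)"
          using PQ A0 lp by (intro divide_left_mono) auto
        finally show ?thesis using lQ by simp
      qed
      also have "A / (2 * A / \<delta> + 1) < \<delta> / 2" using A0 d by (simp add: field_simps)
      finally show "(\<integral>\<omega>. \<bar>z \<omega>\<bar> * \<bar>h \<omega>\<bar> \<partial>M) < \<delta>" by simp
    qed
  qed
qed

end


definition nbhd :: "'a measure \<Rightarrow> ennreal \<Rightarrow> ('a \<Rightarrow> 'b::euclidean_space) \<Rightarrow> (('a \<Rightarrow> 'b) \<Rightarrow> bool) \<Rightarrow> bool" where
  "nbhd M p X P \<longleftrightarrow> (if p = \<infinity> then
        (\<exists>Zs :: ('a \<Rightarrow> 'b) list. \<exists>\<epsilon>>0. (\<forall>Z\<in>set Zs. memLp M 1 Z) \<and>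
           (\<forall>Y. memLp M \<infinity> Y \<and> (\<forall>Z\<in>set Zs. \<bar>pairing M Z (\<lambda>\<omega>. Y \<omega> - X \<omega>)\<bar> < \<epsilon>) \<longrightarrow> P Y))
      else (\<exists>\<epsilon>>0. \<forall>Y. memLp M p Y \<and> Lpnorm M p (\<lambda>\<omega>. Y \<omega> - X \<omega>) < \<epsilon> \<longrightarrow> P Y))"

lemma nbhd_mono:
  assumes "nbhd M p X P" "\<And>Y. memLp M p Y \<Longrightarrow> P Y \<Longrightarrow> Q Y"
  shows "nbhd M p X Q"
proof (cases "p = \<infinity>")
  case True
  then obtain Zs \<epsilon> where "\<epsilon> > 0" "\<forall>Z\<in>set Zs. memLp M 1 Z"
    "\<forall>Y. memLp M \<infinity> Y \<and> (\<forall>Z\<in>set Zs. \<bar>pairing M Z (\<lambda>\<omega>. Y \<omega> - X \<omega>)\<bar> < \<epsilon>) \<longrightarrow> P Y"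
    using assms(1) unfolding nbhd_def by auto
  hence "\<exists>Zs :: ('a \<Rightarrow> 'b) list. \<exists>\<epsilon>>0. (\<forall>Z\<in>set Zs. memLp M 1 Z) \<and>
           (\<forall>Y. memLp M \<infinity> Y \<and> (\<forall>Z\<in>set Zs. \<bar>pairing M Z (\<lambda>\<omega>. Y \<omega> - X \<omega>)\<bar> < \<epsilon>) \<longrightarrow> Q Y)"
    using True assms(2) by blast
  thus ?thesis using True unfolding nbhd_def by simp
next
  case False
  then obtain \<epsilon> where "\<epsilon> > 0" "\<forall>Y. memLp M p Y \<and> Lpnorm M p (\<lambda>\<omega>. Y \<omega> - X \<omega>) < \<epsilon> \<longrightarrow> P Y"
    using assms(1) unfolding nbhd_def by auto
  hence "\<exists>\<epsilon>>0. \<forall>Y. memLp M p Y \<and> Lpnorm M p (\<lambda>\<omega>. Y \<omega> - X \<omega>) < \<epsilon> \<longrightarrow> Q Y"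
    using assms(2) by blast
  thus ?thesis using False unfolding nbhd_def by simp
qed

lemma nbhd_open:
  assumes "S \<subseteq> {X. memLp M p X}" "\<And>X. X \<in> S \<Longrightarrow> nbhd M p X (\<lambda>Y. Y \<in> S)"
  shows "Lp_open M p S"
  unfolding Lp_open_def
proof (intro conjI ballI)
  show "S \<subseteq> {X. memLp M p X}" by fact
  fix X assume "X \<in> S"
  from assms(2)[OF this] show "if p = \<infinity> then
        (\<exists>Zs :: ('a \<Rightarrow> 'b) list. \<exists>\<epsilon>>0. (\<forall>Z\<in>set Zs. memLp M 1 Z) \<and>
           {Y. memLp M \<infinity> Y \<and> (\<forall>Z\<in>set Zs. \<bar>pairing M Z (\<lambda>\<omega>. Y \<omega> - X \<omega>)\<bar> < \<epsilon>)} \<subseteq> S)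
      else (\<exists>\<epsilon>>0. {Y. memLp M p Y \<and> Lpnorm M p (\<lambda>\<omega>. Y \<omega> - X \<omega>) < \<epsilon>} \<subseteq> S)"
    unfolding nbhd_def subset_iff mem_Collect_eq by (cases "p = \<infinity>") simp_all
qed

context prob_space begin

lemma memLp_scale:
  fixes X :: "'a \<Rightarrow> 'b::euclidean_space"
  assumes "memLp M p X"
  shows "memLp M p (\<lambda>\<omega>. c *\<^sub>R X \<omega>)"
proof (cases "p = \<infinity>")
  case True
  then obtain C where "AE \<omega> in M. norm (X \<omega>) \<le> C" using assms by (auto simp: memLp_def)
  hence "AE \<omega> in M. norm (c *\<^sub>R X \<omega>) \<le> \<bar>c\<bar> * C" by eventually_elim (auto intro: mult_left_mono)
  thus ?thesis using assms by (intro memLp_bounded) (auto simp: memLp_def)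
next
  case False
  have "integrable M (\<lambda>\<omega>. \<bar>c\<bar> powr enn2real p * norm (X \<omega>) powr enn2real p)"
    using assms False by (simp add: memLp_def)
  hence "integrable M (\<lambda>\<omega>. norm (c *\<^sub>R X \<omega>) powr enn2real p)"
    by (simp add: powr_mult)
  moreover have "X \<in> borel_measurable M" using assms by (simp add: memLp_def)
  hence "(\<lambda>\<omega>. c *\<^sub>R X \<omega>) \<in> borel_measurable M" by measurable
  ultimately show ?thesis using False by (simp add: memLp_def)
qed

lemma usc_majorant:
  fixes f :: "real^'n \<Rightarrow> real" and X :: "'a \<Rightarrow> real^'n" and u r :: "'a \<Rightarrow> real"
    and V :: "'a \<Rightarrow> real^'n"
  assumes p: "1 \<le> p" and agg: "\<forall>X. memLp M p X \<longrightarrow> memLp M p (\<lambda>\<omega>. f (X \<omega>))"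
    and X: "memLp M p X" and u: "memLp M (conj_exp p) u" and u0: "\<forall>\<omega>. 0 \<le> u \<omega>"
    and Vm: "V \<in> borel_measurable M" and VL: "\<forall>\<omega>. norm (V \<omega>) \<le> L"
    and ri: "integrable M (\<lambda>\<omega>. u \<omega> * r \<omega>)"
    and maj: "\<forall>\<omega> y. f y \<le> f (X \<omega>) + V \<omega> \<bullet> (y - X \<omega>) + r \<omega>"
    and a: "(\<integral>\<omega>. u \<omega> * r \<omega> \<partial>M) < a / 2" and a0: "0 < a"
  shows "nbhd M p X (\<lambda>Y. (\<integral>\<omega>. u \<omega> * (f (Y \<omega>) - f (X \<omega>)) \<partial>M) < a)"
proof -
  have L0: "0 \<le> L" using VL norm_ge_zero order_trans by blast
  have Xm: "X \<in> borel_measurable M" using X by (simp add: memLp_def)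
  have fX: "memLp M p (\<lambda>\<omega>. f (X \<omega>))" using agg X by blast
  have key: "(\<integral>\<omega>. u \<omega> * (f (Y \<omega>) - f (X \<omega>)) \<partial>M) \<le>
      (\<integral>\<omega>. u \<omega> * (V \<omega> \<bullet> (Y \<omega> - X \<omega>)) \<partial>M) + (\<integral>\<omega>. u \<omega> * r \<omega> \<partial>M)"
    and wi: "integrable M (\<lambda>\<omega>. u \<omega> * (V \<omega> \<bullet> (Y \<omega> - X \<omega>)))"
    if Y: "memLp M p Y" for Y
  proof -
    have Ym: "Y \<in> borel_measurable M" using Y by (simp add: memLp_def)
    have fY: "memLp M p (\<lambda>\<omega>. f (Y \<omega>))" using agg Y by blast
    have d: "memLp M p (\<lambda>\<omega>. f (Y \<omega>) - f (X \<omega>))" using memLp_diff[OF fY fX] .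
    have di: "integrable M (\<lambda>\<omega>. u \<omega> * (f (Y \<omega>) - f (X \<omega>)))" using holder_integrable[OF p u d] .
    have YX: "memLp M p (\<lambda>\<omega>. Y \<omega> - X \<omega>)" using memLp_diff[OF Y X] .
    have LYX: "memLp M p (\<lambda>\<omega>. L *\<^sub>R norm (Y \<omega> - X \<omega>))" using memLp_scale[OF memLp_norm[OF YX]] .
    have wm: "memLp M p (\<lambda>\<omega>. V \<omega> \<bullet> (Y \<omega> - X \<omega>))"
    proof (rule memLp_mono[OF LYX])
      show "(\<lambda>\<omega>. V \<omega> \<bullet> (Y \<omega> - X \<omega>)) \<in> borel_measurable M" using Vm Ym Xm by measurable
      have "\<bar>V \<omega> \<bullet> (Y \<omega> - X \<omega>)\<bar> \<le> L * norm (Y \<omega> - X \<omega>)" for \<omega>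
        using Cauchy_Schwarz_ineq2[of "V \<omega>" "Y \<omega> - X \<omega>"] VL
        by (meson mult_right_mono norm_ge_zero order_trans)
      thus "AE \<omega> in M. norm (V \<omega> \<bullet> (Y \<omega> - X \<omega>)) \<le> norm (L *\<^sub>R norm (Y \<omega> - X \<omega>))"
        using L0 by simp
    qed
    show wi: "integrable M (\<lambda>\<omega>. u \<omega> * (V \<omega> \<bullet> (Y \<omega> - X \<omega>)))" using holder_integrable[OF p u wm] .
    have "(\<integral>\<omega>. u \<omega> * (f (Y \<omega>) - f (X \<omega>)) \<partial>M) \<le> (\<integral>\<omega>. u \<omega> * (V \<omega> \<bullet> (Y \<omega> - X \<omega>)) + u \<omega> * r \<omega> \<partial>M)"
    proof (rule integral_mono[OF di])
      show "integrable M (\<lambda>\<omega>. u \<omega> * (V \<omega> \<bullet> (Y \<omega> - X \<omega>)) + u \<omega> * r \<omega>)" using wi ri by simp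
      fix \<omega>
      have "f (Y \<omega>) - f (X \<omega>) \<le> V \<omega> \<bullet> (Y \<omega> - X \<omega>) + r \<omega>" using maj by smt
      hence "u \<omega> * (f (Y \<omega>) - f (X \<omega>)) \<le> u \<omega> * (V \<omega> \<bullet> (Y \<omega> - X \<omega>) + r \<omega>)"
        using u0 by (intro mult_left_mono) auto
      thus "u \<omega> * (f (Y \<omega>) - f (X \<omega>)) \<le> u \<omega> * (V \<omega> \<bullet> (Y \<omega> - X \<omega>)) + u \<omega> * r \<omega>"
        by (simp add: distrib_left)
    qed
    also have "\<dots> = (\<integral>\<omega>. u \<omega> * (V \<omega> \<bullet> (Y \<omega> - X \<omega>)) \<partial>M) + (\<integral>\<omega>. u \<omega> * r \<omega> \<partial>M)"
      using wi ri by simp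
    finally show "(\<integral>\<omega>. u \<omega> * (f (Y \<omega>) - f (X \<omega>)) \<partial>M) \<le>
      (\<integral>\<omega>. u \<omega> * (V \<omega> \<bullet> (Y \<omega> - X \<omega>)) \<partial>M) + (\<integral>\<omega>. u \<omega> * r \<omega> \<partial>M)" .
  qed
  show ?thesis
  proof (cases "p = \<infinity>")
    case True
    hence q1: "conj_exp p = 1" by (simp add: conj_exp_def)
    have u1: "memLp M 1 u" using u q1 by simp
    have um: "u \<in> borel_measurable M" using u by (simp add: memLp_def)
    define Z where "Z = (\<lambda>\<omega>. u \<omega> *\<^sub>R V \<omega>)"
    have Z1: "memLp M 1 Z"
    proof (rule memLp_mono[OF memLp_scale[OF u1, of L]])
      show "Z \<in> borel_measurable M" unfolding Z_def using um Vm by measurable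
      show "AE \<omega> in M. norm (Z \<omega>) \<le> norm (L *\<^sub>R u \<omega>)"
      proof (intro AE_I2)
        fix \<omega>
        have "u \<omega> * norm (V \<omega>) \<le> u \<omega> * L" using VL u0 by (intro mult_left_mono) auto
        thus "norm (Z \<omega>) \<le> norm (L *\<^sub>R u \<omega>)" using u0 L0 by (simp add: Z_def abs_mult mult.commute)
      qed
    qed
    have "a / 2 - (\<integral>\<omega>. u \<omega> * r \<omega> \<partial>M) > 0" using a by simp
    show ?thesis unfolding nbhd_def if_P[OF True]
    proof (intro exI[of _ "[Z]"] exI[of _ "a / 2 - (\<integral>\<omega>. u \<omega> * r \<omega> \<partial>M)"] conjI allI impI)
      show "a / 2 - (\<integral>\<omega>. u \<omega> * r \<omega> \<partial>M) > 0" using a by simp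
      show "\<forall>Z\<in>set [Z]. memLp M 1 Z" using Z1 by simp
      fix Y assume Y: "memLp M \<infinity> Y \<and> (\<forall>Z'\<in>set [Z]. \<bar>pairing M Z' (\<lambda>\<omega>. Y \<omega> - X \<omega>)\<bar> < a / 2 - (\<integral>\<omega>. u \<omega> * r \<omega> \<partial>M))"
      have Yp: "memLp M p Y" using Y True by simp
      have "pairing M Z (\<lambda>\<omega>. Y \<omega> - X \<omega>) = (\<integral>\<omega>. u \<omega> * (V \<omega> \<bullet> (Y \<omega> - X \<omega>)) \<partial>M)"
        by (simp add: pairing_def Z_def)
      hence "(\<integral>\<omega>. u \<omega> * (V \<omega> \<bullet> (Y \<omega> - X \<omega>)) \<partial>M) < a / 2 - (\<integral>\<omega>. u \<omega> * r \<omega> \<partial>M)"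
        using Y by (simp add: abs_less_iff)
      thus "(\<integral>\<omega>. u \<omega> * (f (Y \<omega>) - f (X \<omega>)) \<partial>M) < a" using key(1)[OF Yp] a0 by linarith
    qed
  next
    case False
    define \<delta> where "\<delta> = (a / 2 - (\<integral>\<omega>. u \<omega> * r \<omega> \<partial>M)) / (L + 1)"
    have \<delta>: "0 < \<delta>" unfolding \<delta>_def using a L0 by simp
    obtain \<epsilon> where \<epsilon>: "\<epsilon> > 0"
      and sm: "\<And>h::'a \<Rightarrow> real. memLp M p h \<Longrightarrow> Lpnorm M p h < \<epsilon> \<Longrightarrow> (\<integral>\<omega>. \<bar>u \<omega>\<bar> * \<bar>h \<omega>\<bar> \<partial>M) < \<delta>"
      using holder_small[OF p False u \<delta>] by blast
    show ?thesis unfolding nbhd_def if_not_P[OF False]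
    proof (intro exI[of _ \<epsilon>] conjI allI impI)
      show "\<epsilon> > 0" by fact
      fix Y assume Y: "memLp M p Y \<and> Lpnorm M p (\<lambda>\<omega>. Y \<omega> - X \<omega>) < \<epsilon>"
      have YX: "memLp M p (\<lambda>\<omega>. Y \<omega> - X \<omega>)" using memLp_diff Y X by blast
      have h: "memLp M p (\<lambda>\<omega>. norm (Y \<omega> - X \<omega>))" using memLp_norm[OF YX] .
      have hl: "Lpnorm M p (\<lambda>\<omega>. norm (Y \<omega> - X \<omega>)) < \<epsilon>" using Y by (simp add: Lpnorm_def)
      have s: "(\<integral>\<omega>. \<bar>u \<omega>\<bar> * \<bar>norm (Y \<omega> - X \<omega>)\<bar> \<partial>M) < \<delta>" using sm[OF h hl] .
      have ua: "memLp M (conj_exp p) (\<lambda>\<omega>. \<bar>u \<omega>\<bar>)" using memLp_norm[OF u] by simp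
      have hi: "integrable M (\<lambda>\<omega>. \<bar>u \<omega>\<bar> * norm (Y \<omega> - X \<omega>))" using holder_integrable[OF p ua h] .
      have "(\<integral>\<omega>. u \<omega> * (V \<omega> \<bullet> (Y \<omega> - X \<omega>)) \<partial>M) \<le> (\<integral>\<omega>. L * (\<bar>u \<omega>\<bar> * norm (Y \<omega> - X \<omega>)) \<partial>M)"
      proof (rule integral_mono)
        show "integrable M (\<lambda>\<omega>. u \<omega> * (V \<omega> \<bullet> (Y \<omega> - X \<omega>)))" using wi[of Y] Y by blast
        show "integrable M (\<lambda>\<omega>. L * (\<bar>u \<omega>\<bar> * norm (Y \<omega> - X \<omega>)))" using hi by simp
        fix \<omega>
        have "V \<omega> \<bullet> (Y \<omega> - X \<omega>) \<le> L * norm (Y \<omega> - X \<omega>)"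
          using Cauchy_Schwarz_ineq2[of "V \<omega>" "Y \<omega> - X \<omega>"] VL
          by (meson abs_le_D1 mult_right_mono norm_ge_zero order_trans)
        hence "u \<omega> * (V \<omega> \<bullet> (Y \<omega> - X \<omega>)) \<le> u \<omega> * (L * norm (Y \<omega> - X \<omega>))"
          using u0 by (intro mult_left_mono) auto
        thus "u \<omega> * (V \<omega> \<bullet> (Y \<omega> - X \<omega>)) \<le> L * (\<bar>u \<omega>\<bar> * norm (Y \<omega> - X \<omega>))"
          using u0 by (simp add: abs_of_nonneg mult.left_commute)
      qed
      also have "\<dots> = L * (\<integral>\<omega>. \<bar>u \<omega>\<bar> * norm (Y \<omega> - X \<omega>) \<partial>M)" by simp
      also have "\<dots> \<le> L * \<delta>" using s L0 by (intro mult_left_mono) auto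
      also have "\<dots> < a / 2 - (\<integral>\<omega>. u \<omega> * r \<omega> \<partial>M)"
        unfolding \<delta>_def using a L0 by (simp add: field_simps)
      finally show "(\<integral>\<omega>. u \<omega> * (f (Y \<omega>) - f (X \<omega>)) \<partial>M) < a" using key(1)[of Y] Y a0 by linarith
    qed
  qed
qed

end


context prob_space begin

lemma demicont_from_usc:
  fixes f :: "real^'n \<Rightarrow> real"
  assumes p: "1 \<le> p" and agg: "\<forall>X. memLp M p X \<longrightarrow> memLp M p (\<lambda>\<omega>. f (X \<omega>))"
    and usc: "\<And>(u::'a \<Rightarrow> real) (X::'a \<Rightarrow> real^'n) a. memLp M (conj_exp p) u \<Longrightarrow> (\<forall>\<omega>. 0 \<le> u \<omega>) \<Longrightarrow>
       memLp M p X \<Longrightarrow> 0 < a \<Longrightarrow> nbhd M p X (\<lambda>Y. (\<integral>\<omega>. u \<omega> * (f (Y \<omega>) - f (X \<omega>)) \<partial>M) < a)"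
  shows "Lp_lower_demicontinuous M p (induced f)"
  unfolding Lp_lower_demicontinuous_def
proof (intro allI impI)
  fix Ys :: "'a \<Rightarrow> real" and c :: real
  assume Ys: "memLp M (conj_exp p) Ys \<and> \<not> (AE \<omega> in M. Ys \<omega> = 0)"
  hence Ysq: "memLp M (conj_exp p) Ys" by simp
  have Ysm: "Ys \<in> borel_measurable M" using Ysq by (simp add: memLp_def)
  show "Lp_open M p {X. memLp M p X \<and> (\<exists>D\<in>Lp_cone M p. c < pairing M Ys (\<lambda>\<omega>. induced f X \<omega> + D \<omega>))}"
  proof (rule nbhd_open)
    show "{X. memLp M p X \<and> (\<exists>D\<in>Lp_cone M p. c < pairing M Ys (\<lambda>\<omega>. induced f X \<omega> + D \<omega>))} \<subseteq> {X. memLp M p X}"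
      by auto
    fix X assume "X \<in> {X. memLp M p X \<and> (\<exists>D\<in>Lp_cone M p. c < pairing M Ys (\<lambda>\<omega>. induced f X \<omega> + D \<omega>))}"
    then obtain D where X: "memLp M p X" and D: "D \<in> Lp_cone M p"
      and gt: "c < pairing M Ys (\<lambda>\<omega>. f (X \<omega>) + D \<omega>)"
      by (auto simp: induced_def)
    have Dm: "memLp M p D" and D0: "AE \<omega> in M. 0 \<le> D \<omega>" using D by (auto simp: Lp_cone_def)
    define u where "u = (\<lambda>\<omega>. max 0 (- Ys \<omega>))"
    have u: "memLp M (conj_exp p) u"
    proof (rule memLp_mono[OF Ysq])
      show "u \<in> borel_measurable M" unfolding u_def using Ysm by measurable
      show "AE \<omega> in M. norm (u \<omega>) \<le> norm (Ys \<omega>)" by (auto simp: u_def)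
    qed
    have u0: "\<forall>\<omega>. 0 \<le> u \<omega>" by (simp add: u_def)
    define a where "a = pairing M Ys (\<lambda>\<omega>. f (X \<omega>) + D \<omega>) - c"
    have a0: "0 < a" using gt by (simp add: a_def)
    have N: "nbhd M p X (\<lambda>Y. (\<integral>\<omega>. u \<omega> * (f (Y \<omega>) - f (X \<omega>)) \<partial>M) < a)" using usc[OF u u0 X a0] .
    have fX: "memLp M p (\<lambda>\<omega>. f (X \<omega>))" using agg X by blast
    have fXm: "(\<lambda>\<omega>. f (X \<omega>)) \<in> borel_measurable M" using fX by (simp add: memLp_def)
    have Dmm: "D \<in> borel_measurable M" using Dm by (simp add: memLp_def)
    show "nbhd M p X (\<lambda>Y. Y \<in> {X. memLp M p X \<and> (\<exists>D\<in>Lp_cone M p. c < pairing M Ys (\<lambda>\<omega>. induced f X \<omega> + D \<omega>))})"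
    proof (rule nbhd_mono[OF N])
      fix Y assume Y: "memLp M p Y" and lt: "(\<integral>\<omega>. u \<omega> * (f (Y \<omega>) - f (X \<omega>)) \<partial>M) < a"
      have fY: "memLp M p (\<lambda>\<omega>. f (Y \<omega>))" using agg Y by blast
      have fYm: "(\<lambda>\<omega>. f (Y \<omega>)) \<in> borel_measurable M" using fY by (simp add: memLp_def)
      define D' where "D' = (\<lambda>\<omega>. D \<omega> + (if 0 \<le> Ys \<omega> then max 0 (f (X \<omega>) - f (Y \<omega>)) else 0))"
      have D'm: "memLp M p D'"
      proof (rule memLp_bound2[OF Dm memLp_diff[OF fX fY]])
        show "D' \<in> borel_measurable M" unfolding D'_def using Dmm fXm fYm Ysm by measurable
        show "AE \<omega> in M. norm (D' \<omega>) \<le> norm (D \<omega>) + norm (f (X \<omega>) - f (Y \<omega>))"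
          by (intro AE_I2) (auto simp: D'_def)
      qed
      have D'0: "AE \<omega> in M. 0 \<le> D' \<omega>" using D0 by eventually_elim (auto simp: D'_def)
      have D'c: "D' \<in> Lp_cone M p" using D'm D'0 by (simp add: Lp_cone_def)
      have i1: "integrable M (\<lambda>\<omega>. Ys \<omega> * (f (Y \<omega>) + D' \<omega>))"
        using holder_integrable[OF p Ysq memLp_add[OF fY D'm]] .
      have i2: "integrable M (\<lambda>\<omega>. Ys \<omega> * (f (X \<omega>) + D \<omega>))"
        using holder_integrable[OF p Ysq memLp_add[OF fX Dm]] .
      have i3: "integrable M (\<lambda>\<omega>. u \<omega> * (f (Y \<omega>) - f (X \<omega>)))"
        using holder_integrable[OF p u memLp_diff[OF fY fX]] .
      have "pairing M Ys (\<lambda>\<omega>. f (X \<omega>) + D \<omega>) - (\<integral>\<omega>. u \<omega> * (f (Y \<omega>) - f (X \<omega>)) \<partial>M)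
          = (\<integral>\<omega>. Ys \<omega> * (f (X \<omega>) + D \<omega>) - u \<omega> * (f (Y \<omega>) - f (X \<omega>)) \<partial>M)"
        using i2 i3 by (simp add: pairing_def)
      also have "\<dots> \<le> (\<integral>\<omega>. Ys \<omega> * (f (Y \<omega>) + D' \<omega>) \<partial>M)"
      proof (rule integral_mono)
        show "integrable M (\<lambda>\<omega>. Ys \<omega> * (f (X \<omega>) + D \<omega>) - u \<omega> * (f (Y \<omega>) - f (X \<omega>)))"
          using i2 i3 by simp
        show "integrable M (\<lambda>\<omega>. Ys \<omega> * (f (Y \<omega>) + D' \<omega>))" by (rule i1)
        fix \<omega>
        show "Ys \<omega> * (f (X \<omega>) + D \<omega>) - u \<omega> * (f (Y \<omega>) - f (X \<omega>)) \<le> Ys \<omega> * (f (Y \<omega>) + D' \<omega>)"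
        proof (cases "0 \<le> Ys \<omega>")
          case True
          have "f (X \<omega>) + D \<omega> \<le> f (Y \<omega>) + D' \<omega>" using True by (simp add: D'_def)
          hence "Ys \<omega> * (f (X \<omega>) + D \<omega>) \<le> Ys \<omega> * (f (Y \<omega>) + D' \<omega>)"
            using True by (rule mult_left_mono)
          thus ?thesis using True by (simp add: u_def)
        next
          case False
          thus ?thesis by (simp add: u_def D'_def algebra_simps)
        qed
      qed
      also have "\<dots> = pairing M Ys (\<lambda>\<omega>. f (Y \<omega>) + D' \<omega>)" by (simp add: pairing_def)
      finally have "c < pairing M Ys (\<lambda>\<omega>. f (Y \<omega>) + D' \<omega>)" using lt by (simp add: a_def)
      thus "Y \<in> {X. memLp M p X \<and> (\<exists>D\<in>Lp_cone M p. c < pairing M Ys (\<lambda>\<omega>. induced f X \<omega> + D \<omega>))}"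
        using Y D'c by (auto simp: induced_def)
    qed
  qed
qed

end


lemma linear_repr:
  fixes f :: "'b::euclidean_space \<Rightarrow> real"
  assumes "linear f"
  shows "\<exists>w. \<forall>x. f x = w \<bullet> x"
proof (intro exI allI)
  fix x
  have "f x = f x \<bullet> 1" by simp
  also have "\<dots> = (\<Sum>i\<in>Basis. x \<bullet> i * (f i \<bullet> 1))" by (rule Linear_Algebra.linear_componentwise[OF assms])
  also have "\<dots> = (\<Sum>i\<in>Basis. f i *\<^sub>R i) \<bullet> x"
    by (simp add: inner_sum_left inner_commute[of x] mult.commute)
  finally show "f x = (\<Sum>i\<in>Basis. f i *\<^sub>R i) \<bullet> x" .
qed

context prob_space begin

lemma linear_usc:
  fixes f :: "real^'n \<Rightarrow> real"
  assumes lin: "linear f" and p: "1 \<le> p" and agg: "\<forall>X. memLp M p X \<longrightarrow> memLp M p (\<lambda>\<omega>. f (X \<omega>))"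
    and u: "memLp M (conj_exp p) u" and u0: "\<forall>\<omega>. 0 \<le> u \<omega>" and X: "memLp M p X" and a: "0 < a"
  shows "nbhd M p X (\<lambda>Y. (\<integral>\<omega>. u \<omega> * (f (Y \<omega>) - f (X \<omega>)) \<partial>M) < a)"
proof -
  obtain w where w: "\<forall>x. f x = w \<bullet> x" using linear_repr[OF lin] by blast
  show ?thesis
  proof (rule usc_majorant[OF p agg X u u0, where V="\<lambda>_. w" and L="norm w" and r="\<lambda>_. 0"])
    show "(\<lambda>_. w) \<in> borel_measurable M" by simp
    show "\<forall>\<omega>. norm w \<le> norm w" by simp
    show "integrable M (\<lambda>\<omega>. u \<omega> * 0)" by simp
    show "\<forall>\<omega> y. f y \<le> f (X \<omega>) + w \<bullet> (y - X \<omega>) + 0" using w by (simp add: inner_diff_right)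
    show "(\<integral>\<omega>. u \<omega> * 0 \<partial>M) < a / 2" using a by simp
    show "0 < a" by fact
  qed
qed

lemma Lp_regularly_increasing_induced:
  fixes f :: "real^'n \<Rightarrow> real"
  assumes ri: "regularly_increasing_fun f" and p: "1 \<le> p"
    and agg: "\<forall>X. memLp M p X \<longrightarrow> memLp M p (\<lambda>\<omega>. f (X \<omega>))"
  shows "Lp_regularly_increasing M p (induced f)"
  unfolding Lp_regularly_increasing_def
proof (intro allI impI conjI)
  fix X1 X2 :: "'a \<Rightarrow> real^'n"
  assume X: "memLp M p X1 \<and> memLp M p X2"
  have fX1: "memLp M p (\<lambda>\<omega>. f (X1 \<omega>))" and fX2: "memLp M p (\<lambda>\<omega>. f (X2 \<omega>))" using agg X by auto
  have mono: "\<And>x y. x \<le> y \<Longrightarrow> f x \<le> f y" and strict: "\<And>x y. (\<forall>i. x $ i < y $ i) \<Longrightarrow> f x < f y"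
    using ri unfolding regularly_increasing_fun_def by auto
  have dm: "memLp M p (\<lambda>\<omega>. induced f X2 \<omega> - induced f X1 \<omega>)"
    using memLp_diff[OF fX2 fX1] by (simp add: induced_def)
  have cone: "(\<lambda>\<omega>. induced f X2 \<omega> - induced f X1 \<omega>) \<in> Lp_cone M p"
    if "(\<lambda>\<omega>. X2 \<omega> - X1 \<omega>) \<in> Lp_cone M p"
  proof -
    have "AE \<omega> in M. 0 \<le> X2 \<omega> - X1 \<omega>" using that by (simp add: Lp_cone_def)
    hence "AE \<omega> in M. 0 \<le> induced f X2 \<omega> - induced f X1 \<omega>"
    proof eventually_elim
      case (elim \<omega>)
      hence "X1 \<omega> \<le> X2 \<omega>" by (simp add: less_eq_vec_def)
      thus ?case using mono by (simp add: induced_def)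
    qed
    thus ?thesis using dm by (simp add: Lp_cone_def)
  qed
  show "(\<lambda>\<omega>. X2 \<omega> - X1 \<omega>) \<in> Lp_cone M p \<Longrightarrow> (\<lambda>\<omega>. induced f X2 \<omega> - induced f X1 \<omega>) \<in> Lp_cone M p"
    by (rule cone)
  assume sh: "(\<lambda>\<omega>. X2 \<omega> - X1 \<omega>) \<in> Lp_cone_sharp M p"
  have shc: "(\<lambda>\<omega>. X2 \<omega> - X1 \<omega>) \<in> Lp_cone M p" using sh by (simp add: Lp_cone_sharp_def)
  have X1m: "X1 \<in> borel_measurable M" and X2m: "X2 \<in> borel_measurable M" using X by (auto simp: memLp_def)
  have pos: "AE \<omega> in M. 0 < (X2 \<omega> - X1 \<omega>) $ i" for i
  proof -
    define E where "E = {\<omega> \<in> space M. (X2 \<omega> - X1 \<omega>) $ i \<le> 0}"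
    have Em: "E \<in> sets M" unfolding E_def using X1m X2m by measurable
    define Z :: "'a \<Rightarrow> real^'n" where "Z = (\<lambda>\<omega>. indicator E \<omega> *\<^sub>R axis i 1)"
    have Zm: "Z \<in> borel_measurable M" unfolding Z_def using Em by measurable
    have Zc: "Z \<in> Lp_cone M (conj_exp p)"
    proof -
      have "memLp M (conj_exp p) Z"
        by (rule memLp_bounded[OF Zm, of 1]) (auto simp: Z_def indicator_def)
      moreover have "AE \<omega> in M. 0 \<le> Z \<omega>"
        by (intro AE_I2) (auto simp: Z_def less_eq_vec_def axis_def indicator_def)
      ultimately show ?thesis by (simp add: Lp_cone_def)
    qed
    have "pairing M Z (\<lambda>\<omega>. X2 \<omega> - X1 \<omega>) = (\<integral>\<omega>. indicator E \<omega> * (X2 \<omega> - X1 \<omega>) $ i \<partial>M)"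
      by (simp add: pairing_def Z_def inner_axis')
    also have "\<dots> \<le> 0"
    proof -
      have "0 \<le> (\<integral>\<omega>. - (indicator E \<omega> * (X2 \<omega> - X1 \<omega>) $ i) \<partial>M)"
        by (intro integral_nonneg_AE AE_I2) (auto simp: E_def indicator_def)
      thus ?thesis by simp
    qed
    finally have "\<not> pairing M Z (\<lambda>\<omega>. X2 \<omega> - X1 \<omega>) > 0" by simp
    hence "AE \<omega> in M. Z \<omega> = 0" using sh Zc unfolding Lp_cone_sharp_def by blast
    with AE_space show ?thesis
    proof eventually_elim
      case (elim \<omega>)
      hence "indicator E \<omega> = (0::real)" "\<omega> \<in> space M"
        by (simp_all add: Z_def)
      thus ?case by (auto simp: E_def indicator_def split: if_splits)
    qed
  qed
  have "AE \<omega> in M. \<forall>i\<in>UNIV. 0 < (X2 \<omega> - X1 \<omega>) $ i"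
    by (rule AE_finite_allI) (use pos in auto)
  hence gpos: "AE \<omega> in M. 0 < induced f X2 \<omega> - induced f X1 \<omega>"
  proof eventually_elim
    case (elim \<omega>)
    hence "\<forall>i. X1 \<omega> $ i < X2 \<omega> $ i" by simp
    thus ?case using strict by (simp add: induced_def)
  qed
  show "(\<lambda>\<omega>. induced f X2 \<omega> - induced f X1 \<omega>) \<in> Lp_cone_sharp M p"
    unfolding Lp_cone_sharp_def
  proof (intro CollectI conjI ballI impI)
    show "(\<lambda>\<omega>. induced f X2 \<omega> - induced f X1 \<omega>) \<in> Lp_cone M p" using cone[OF shc] .
    fix Z :: "'a \<Rightarrow> real" assume Zc: "Z \<in> Lp_cone M (conj_exp p)" and Znz: "\<not> (AE \<omega> in M. Z \<omega> = 0)"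
    have Zq: "memLp M (conj_exp p) Z" and Z0: "AE \<omega> in M. 0 \<le> Z \<omega>" using Zc by (auto simp: Lp_cone_def)
    have int: "integrable M (\<lambda>\<omega>. Z \<omega> * (induced f X2 \<omega> - induced f X1 \<omega>))"
      using holder_integrable[OF p Zq dm] .
    have nn: "AE \<omega> in M. 0 \<le> Z \<omega> * (induced f X2 \<omega> - induced f X1 \<omega>)"
      using Z0 gpos by eventually_elim simp
    have "(\<integral>\<omega>. Z \<omega> * (induced f X2 \<omega> - induced f X1 \<omega>) \<partial>M) \<noteq> 0"
    proof
      assume "(\<integral>\<omega>. Z \<omega> * (induced f X2 \<omega> - induced f X1 \<omega>) \<partial>M) = 0"
      hence "AE \<omega> in M. Z \<omega> * (induced f X2 \<omega> - induced f X1 \<omega>) = 0"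
        using integral_nonneg_eq_0_iff_AE[OF int nn] by simp
      hence "AE \<omega> in M. Z \<omega> = 0" using gpos by eventually_elim auto
      thus False using Znz by simp
    qed
    moreover have "0 \<le> (\<integral>\<omega>. Z \<omega> * (induced f X2 \<omega> - induced f X1 \<omega>) \<partial>M)"
      using nn by (rule integral_nonneg_AE)
    ultimately show "0 < pairing M Z (\<lambda>\<omega>. induced f X2 \<omega> - induced f X1 \<omega>)"
      by (simp add: pairing_def)
  qed
qed

end


lemma concave_continuous:
  fixes f :: "'b::euclidean_space \<Rightarrow> real"
  assumes "concave_on UNIV f"
  shows "continuous_on UNIV f"
proof -
  have "continuous_on UNIV (\<lambda>x. - f x)"
    using assms by (intro convex_on_continuous) (auto simp: concave_on_def)
  from continuous_on_minus[OF this] show ?thesis by simp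
qed

lemma supergradient:
  fixes f :: "'b::euclidean_space \<Rightarrow> real"
  assumes conc: "concave_on UNIV f"
  shows "\<exists>g. \<forall>y. f y \<le> f v + g \<bullet> (y - v)"
proof -
  have cv: "\<And>x y u w. 0 \<le> u \<Longrightarrow> 0 \<le> w \<Longrightarrow> u + w = 1 \<Longrightarrow> u * f x + w * f y \<le> f (u *\<^sub>R x + w *\<^sub>R y)"
  proof -
    fix x y u w :: _ assume h: "0 \<le> (u::real)" "0 \<le> w" "u + w = 1"
    have "- f (u *\<^sub>R x + w *\<^sub>R y) \<le> u * (- f x) + w * (- f y)"
      using conc h unfolding concave_on_def convex_on_def by blast
    thus "u * f x + w * f y \<le> f (u *\<^sub>R x + w *\<^sub>R y)" by simp
  qed
  define S :: "('b \<times> real) set" where "S = {z. snd z \<le> f (fst z)}"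
  define T :: "('b \<times> real) set" where "T = {z. fst z = v \<and> f v < snd z}"
  have cS: "convex S" unfolding convex_def
  proof (intro ballI allI impI)
    fix z1 z2 :: "'b \<times> real" and u w :: real
    assume h: "z1 \<in> S" "z2 \<in> S" "0 \<le> u" "0 \<le> w" "u + w = 1"
    have "u * snd z1 + w * snd z2 \<le> u * f (fst z1) + w * f (fst z2)"
      using h by (intro add_mono mult_left_mono) (auto simp: S_def)
    also have "\<dots> \<le> f (u *\<^sub>R fst z1 + w *\<^sub>R fst z2)" using cv h by blast
    finally show "u *\<^sub>R z1 + w *\<^sub>R z2 \<in> S" by (simp add: S_def)
  qed
  have cT: "convex T" unfolding convex_def
  proof (intro ballI allI impI)
    fix z1 z2 :: "'b \<times> real" and u w :: real
    assume h: "z1 \<in> T" "z2 \<in> T" "0 \<le> u" "0 \<le> w" "u + w = 1"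
    have fz: "fst z1 = v" "fst z2 = v" "f v < snd z1" "f v < snd z2" using h by (auto simp: T_def)
    have "f v < u * snd z1 + w * snd z2"
    proof (cases "u = 0")
      case True thus ?thesis using h fz by simp
    next
      case False
      hence "u * f v < u * snd z1" using h fz by (intro mult_strict_left_mono) auto
      moreover have "w * f v \<le> w * snd z2" using h fz by (intro mult_left_mono) auto
      ultimately have "u * f v + w * f v < u * snd z1 + w * snd z2" by linarith
      thus ?thesis using h by (simp add: distrib_right[symmetric])
    qed
    moreover have "fst (u *\<^sub>R z1 + w *\<^sub>R z2) = v" using fz h by (simp add: scaleR_left_distrib[symmetric])
    ultimately show "u *\<^sub>R z1 + w *\<^sub>R z2 \<in> T" by (simp add: T_def)
  qed
  have "(v, f v) \<in> S" "(v, f v + 1) \<in> T" unfolding S_def T_def by auto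
  hence ne: "S \<noteq> {}" "T \<noteq> {}" by auto
  have dj: "S \<inter> T = {}" unfolding S_def T_def by auto
  obtain a b where a0: "a \<noteq> 0" and aS: "\<forall>z\<in>S. a \<bullet> z \<le> b" and aT: "\<forall>z\<in>T. b \<le> a \<bullet> z"
    using separating_hyperplane_sets[OF cS cT ne dj] by blast
  define \<alpha> where "\<alpha> = fst a"
  define \<beta> where "\<beta> = snd a"
  have ip: "a \<bullet> (x, t) = \<alpha> \<bullet> x + \<beta> * t" for x t by (simp add: \<alpha>_def \<beta>_def inner_prod_def)
  have hS: "\<alpha> \<bullet> x + \<beta> * f x \<le> b" for x using aS[rule_format, of "(x, f x)"] ip by (simp add: S_def)
  have hT: "b \<le> \<alpha> \<bullet> v + \<beta> * (f v + s)" if "0 < s" for s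
    using aT[rule_format, of "(v, f v + s)"] ip that by (simp add: T_def)
  have \<beta>0: "0 \<le> \<beta>" using hS[of v] hT[of 1] by (simp add: algebra_simps)
  have \<beta>nz: "\<beta> \<noteq> 0"
  proof
    assume z: "\<beta> = 0"
    have "\<alpha> \<bullet> (v + \<alpha>) \<le> \<alpha> \<bullet> v" using hS[of "v + \<alpha>"] hT[of 1] z by simp
    hence "\<alpha> \<bullet> \<alpha> \<le> 0" by (simp add: inner_add_right)
    hence "\<alpha> \<bullet> \<alpha> = 0" using inner_ge_zero[of \<alpha>] by linarith
    hence "\<alpha> = 0" by simp
    hence "a = 0" using z by (simp add: \<alpha>_def \<beta>_def prod_eq_iff)
    thus False using a0 by simp
  qed
  hence \<beta>p: "0 < \<beta>" using \<beta>0 by simp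
  show ?thesis
  proof (intro exI[of _ "- (1 / \<beta>) *\<^sub>R \<alpha>"] allI)
    fix y
    have "\<alpha> \<bullet> y + \<beta> * f y \<le> \<alpha> \<bullet> v + \<beta> * f v"
    proof (rule field_le_epsilon)
      fix e :: real assume e: "0 < e"
      have "\<alpha> \<bullet> y + \<beta> * f y \<le> \<alpha> \<bullet> v + \<beta> * (f v + e / \<beta>)"
        using hS[of y] hT[of "e / \<beta>"] e \<beta>p by simp
      also have "\<dots> = \<alpha> \<bullet> v + \<beta> * f v + e" using \<beta>p by (simp add: field_simps)
      finally show "\<alpha> \<bullet> y + \<beta> * f y \<le> \<alpha> \<bullet> v + \<beta> * f v + e" .
    qed
    hence "(f y - f v) * \<beta> \<le> \<alpha> \<bullet> v - \<alpha> \<bullet> y" by (simp add: algebra_simps)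
    hence le: "f y - f v \<le> (\<alpha> \<bullet> v - \<alpha> \<bullet> y) / \<beta>" using \<beta>p by (simp add: pos_le_divide_eq)
    have "(- (1 / \<beta>) *\<^sub>R \<alpha>) \<bullet> (y - v) = (\<alpha> \<bullet> v - \<alpha> \<bullet> y) / \<beta>"
      using \<beta>p by (simp add: inner_diff_right field_simps)
    thus "f y \<le> f v + (- (1 / \<beta>) *\<^sub>R \<alpha>) \<bullet> (y - v)" using le by simp
  qed
qed

lemma dense_seq:
  "\<exists>d :: nat \<Rightarrow> 'b::euclidean_space. \<forall>x e. 0 < e \<longrightarrow> (\<exists>k. dist (d k) x < e)"
proof -
  obtain D :: "'b set" where D: "countable D" "\<And>X. open X \<Longrightarrow> X \<noteq> {} \<Longrightarrow> \<exists>d\<in>D. d \<in> X"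
    using countable_dense_setE by blast
  show ?thesis
  proof (intro exI[of _ "from_nat_into D"] allI impI)
    fix x :: 'b and e :: real assume e: "0 < e"
    obtain d where d: "d \<in> D" "d \<in> ball x e" using D(2)[of "ball x e"] e by auto
    obtain k where "from_nat_into D k = d" using from_nat_into_surj[OF D(1) d(1)] by blast
    thus "\<exists>k. dist (from_nat_into D k) x < e" using d(2) by (auto simp: dist_commute)
  qed
qed

context prob_space begin

lemma tail_small:
  fixes X :: "'a \<Rightarrow> 'b::euclidean_space" and g :: "'a \<Rightarrow> real"
  assumes Xm: "X \<in> borel_measurable M" and gi: "integrable M g" and g0: "\<forall>\<omega>. 0 \<le> g \<omega>" and \<eta>: "0 < \<eta>"
  shows "\<exists>R. 0 \<le> R \<and> (\<integral>\<omega>. (if norm (X \<omega>) \<le> R then 0 else g \<omega>) \<partial>M) < \<eta>"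
proof -
  define s where "s = (\<lambda>(n::nat) \<omega>. if norm (X \<omega>) \<le> real n then 0 else g \<omega>)"
  have gm: "g \<in> borel_measurable M" using gi by simp
  have "(\<lambda>n. integral\<^sup>L M (s n)) \<longlonglongrightarrow> integral\<^sup>L M (\<lambda>\<omega>. 0::real)"
  proof (rule integral_dominated_convergence[where w=g])
    show "(\<lambda>\<omega>. 0::real) \<in> borel_measurable M" by simp
    show "s n \<in> borel_measurable M" for n unfolding s_def using Xm gm by measurable
    show "integrable M g" by fact
    show "AE \<omega> in M. (\<lambda>n. s n \<omega>) \<longlonglongrightarrow> 0"
    proof (intro AE_I2 tendsto_eventually)
      fix \<omega>
      obtain N :: nat where "norm (X \<omega>) \<le> real N" using real_arch_simple by blast
      hence "\<forall>n\<ge>N. s n \<omega> = 0" unfolding s_def by (auto intro: order_trans)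
      thus "\<forall>\<^sub>F n in sequentially. s n \<omega> = 0" using eventually_sequentially by blast
    qed
    show "AE \<omega> in M. norm (s n \<omega>) \<le> g \<omega>" for n using g0 by (auto simp: s_def)
  qed
  hence "\<forall>\<^sub>F n in sequentially. integral\<^sup>L M (s n) < \<eta>" using \<eta> by (intro order_tendstoD(2)) auto
  then obtain N where "\<forall>n\<ge>N. integral\<^sup>L M (s n) < \<eta>" unfolding eventually_sequentially by blast
  hence "integral\<^sup>L M (s N) < \<eta>" by simp
  thus ?thesis by (intro exI[of _ "real N"]) (auto simp: s_def)
qed

end


context prob_space begin

lemma concave_majorant:
  fixes f :: "real^'n \<Rightarrow> real" and X :: "'a \<Rightarrow> real^'n" and u :: "'a \<Rightarrow> real"
  assumes conc: "concave_on UNIV f" and B: "\<forall>x. f x \<le> B"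
    and Xm: "X \<in> borel_measurable M" and u0: "\<forall>\<omega>. 0 \<le> u \<omega>" and ui: "integrable M u"
    and uBi: "integrable M (\<lambda>\<omega>. u \<omega> * (B - f (X \<omega>)))" and \<eta>: "0 < \<eta>"
  shows "\<exists>V L r. V \<in> borel_measurable M \<and> (\<forall>\<omega>. norm (V \<omega>) \<le> L) \<and> integrable M (\<lambda>\<omega>. u \<omega> * r \<omega>)
        \<and> (\<forall>\<omega> y. f y \<le> f (X \<omega>) + V \<omega> \<bullet> (y - X \<omega>) + r \<omega>) \<and> (\<integral>\<omega>. u \<omega> * r \<omega> \<partial>M) < \<eta>"
proof -
  have fc: "continuous_on UNIV f" by (rule concave_continuous[OF conc])
  have fm: "f \<in> borel_measurable borel" using fc by (rule borel_measurable_continuous_onI)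
  have fXm: "(\<lambda>\<omega>. f (X \<omega>)) \<in> borel_measurable M" using measurable_compose[OF Xm fm] by (simp add: comp_def)
  have g0: "\<forall>\<omega>. 0 \<le> u \<omega> * (B - f (X \<omega>))" using u0 B by simp
  obtain R where R0: "0 \<le> R"
    and Rt: "(\<integral>\<omega>. (if norm (X \<omega>) \<le> R then 0 else u \<omega> * (B - f (X \<omega>))) \<partial>M) < \<eta> / 2"
    using tail_small[OF Xm uBi g0, of "\<eta> / 2"] \<eta> by auto
  define C where "C = cball (0::real^'n) (R + 2)"
  have cpt: "compact C" unfolding C_def by simp
  have fcC: "continuous_on C f" using fc by (rule continuous_on_subset) simp
  obtain K where K: "\<forall>x\<in>C. \<bar>f x\<bar> \<le> K"
  proof -
    have "bounded (f ` C)" using compact_imp_bounded[OF compact_continuous_image[OF fcC cpt]] .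
    then obtain K where "\<forall>y\<in>f ` C. norm y \<le> K" unfolding bounded_iff by blast
    thus ?thesis using that by auto
  qed
  have K0: "0 \<le> K" using K[rule_format, of 0] R0 by (auto simp: C_def)
  define U where "U = (\<integral>\<omega>. u \<omega> \<partial>M)"
  have U0: "0 \<le> U" unfolding U_def using u0 by (intro integral_nonneg_AE) auto
  define e1 where "e1 = \<eta> / (4 * (U + 1))"
  have e1: "0 < e1" unfolding e1_def using \<eta> U0 by simp
  obtain d where d0: "0 < d" and dd: "\<And>x x'. x \<in> C \<Longrightarrow> x' \<in> C \<Longrightarrow> dist x' x < d \<Longrightarrow> dist (f x') (f x) < e1"
    using compact_uniformly_continuous[OF fcC cpt] e1 unfolding uniformly_continuous_on_def by metis
  define \<rho> where "\<rho> = min 1 (min d (e1 / (2 * K + 1)))"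
  have \<rho>: "0 < \<rho>" "\<rho> \<le> 1" "\<rho> \<le> d" using d0 e1 K0 by (auto simp: \<rho>_def)
  have \<rho>K: "2 * K * \<rho> \<le> e1"
  proof -
    have "\<rho> \<le> e1 / (2 * K + 1)" by (simp add: \<rho>_def)
    hence "(2 * K + 1) * \<rho> \<le> e1" using K0 by (simp add: pos_le_divide_eq mult.commute)
    thus ?thesis using \<rho> by (simp add: algebra_simps)
  qed
  define sg where "sg = (\<lambda>v::real^'n. SOME g. \<forall>y. f y \<le> f v + g \<bullet> (y - v))"
  have sg: "f y \<le> f v + sg v \<bullet> (y - v)" for v y
    using someI_ex[OF supergradient[OF conc, of v]] unfolding sg_def by blast
  have sgb: "norm (sg v) \<le> 2 * K" if v: "norm v \<le> R + 1" for v
  proof (cases "sg v = 0")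
    case True thus ?thesis using K0 by simp
  next
    case False
    define g where "g = sg v"
    have ng: "0 < norm g" using False by (simp add: g_def)
    define y where "y = v - (1 / norm g) *\<^sub>R g"
    have "norm y \<le> norm v + norm ((1 / norm g) *\<^sub>R g)" unfolding y_def by (rule norm_triangle_ineq4)
    also have "norm ((1 / norm g) *\<^sub>R g) = 1" using ng by simp
    finally have yC: "y \<in> C" using v by (simp add: C_def)
    have vC: "v \<in> C" using v by (simp add: C_def)
    have "g \<bullet> (y - v) = - norm g"
      using ng by (simp add: y_def inner_scaleR_right power2_norm_eq_inner[symmetric] power2_eq_square)
    hence "f y \<le> f v - norm g" using sg[of y v] by (simp add: g_def)
    hence "norm g \<le> f v - f y" by simp
    also have "\<dots> \<le> \<bar>f v\<bar> + \<bar>f y\<bar>" by simp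
    also have "\<dots> \<le> 2 * K" using K[rule_format, OF yC] K[rule_format, OF vC] by linarith
    finally show ?thesis by (simp add: g_def)
  qed
  obtain ds :: "nat \<Rightarrow> real^'n" where ds: "\<forall>x e. 0 < e \<longrightarrow> (\<exists>k. dist (ds k) x < e)"
    using dense_seq by blast
  define J where "J = (\<lambda>\<omega>. LEAST k. dist (ds k) (X \<omega>) < \<rho>)"
  have Jm: "J \<in> M \<rightarrow>\<^sub>M count_space UNIV"
    unfolding J_def by (intro measurable_Least) (use Xm in measurable)
  have Jd: "dist (ds (J \<omega>)) (X \<omega>) < \<rho>" for \<omega>
    unfolding J_def by (rule LeastI_ex) (use ds \<rho> in auto)
  have sgm: "(\<lambda>k. sg (ds k)) \<in> count_space UNIV \<rightarrow>\<^sub>M (borel :: (real^'n) measure)"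
    by (simp add: measurable_count_space_eq1)
  have sgJm: "(\<lambda>\<omega>. sg (ds (J \<omega>))) \<in> borel_measurable M"
    using measurable_compose[OF Jm sgm] by (simp add: comp_def)
  define V where "V = (\<lambda>\<omega>. if norm (X \<omega>) \<le> R then sg (ds (J \<omega>)) else 0)"
  have Vm: "V \<in> borel_measurable M" unfolding V_def using Xm sgJm by measurable
  have dsn: "norm (ds (J \<omega>)) \<le> norm (X \<omega>) + 1" for \<omega>
  proof -
    have "norm (ds (J \<omega>)) \<le> norm (X \<omega>) + dist (ds (J \<omega>)) (X \<omega>)"
      by (metis dist_norm norm_triangle_sub add.commute)
    thus ?thesis using Jd[of \<omega>] \<rho> by linarith
  qed
  have VL: "\<forall>\<omega>. norm (V \<omega>) \<le> 2 * K"
  proof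
    fix \<omega> show "norm (V \<omega>) \<le> 2 * K"
    proof (cases "norm (X \<omega>) \<le> R")
      case True
      hence "norm (ds (J \<omega>)) \<le> R + 1" using dsn[of \<omega>] by linarith
      thus ?thesis using True sgb by (simp add: V_def)
    qed (use K0 in \<open>simp add: V_def\<close>)
  qed
  define r where "r = (\<lambda>\<omega>. if norm (X \<omega>) \<le> R then 2 * e1 else B - f (X \<omega>))"
  have maj: "\<forall>\<omega> y. f y \<le> f (X \<omega>) + V \<omega> \<bullet> (y - X \<omega>) + r \<omega>"
  proof (intro allI)
    fix \<omega> y
    show "f y \<le> f (X \<omega>) + V \<omega> \<bullet> (y - X \<omega>) + r \<omega>"
    proof (cases "norm (X \<omega>) \<le> R")
      case True
      define v where "v = ds (J \<omega>)"
      define g where "g = sg v"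
      have vR: "norm v \<le> R + 1" using dsn[of \<omega>] True by (simp add: v_def)
      have vC: "v \<in> C" and XC: "X \<omega> \<in> C" using vR True by (auto simp: C_def)
      have dv: "dist v (X \<omega>) < \<rho>" using Jd by (simp add: v_def)
      have f1: "f v - f (X \<omega>) < e1" using dd[OF XC vC] dv \<rho> by (simp add: dist_real_def abs_less_iff)
      have "g \<bullet> (X \<omega> - v) \<le> norm g * norm (X \<omega> - v)" by (rule norm_cauchy_schwarz)
      also have "\<dots> \<le> 2 * K * \<rho>"
      proof (rule mult_mono)
        show "norm g \<le> 2 * K" using sgb[OF vR] by (simp add: g_def)
        show "norm (X \<omega> - v) \<le> \<rho>" using dv by (simp add: dist_norm norm_minus_commute)
      qed (use K0 in auto)
      finally have f2: "g \<bullet> (X \<omega> - v) \<le> e1" using \<rho>K by linarith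
      have "f y \<le> f v + g \<bullet> (y - v)" using sg by (simp add: g_def)
      also have "g \<bullet> (y - v) = g \<bullet> (y - X \<omega>) + g \<bullet> (X \<omega> - v)" by (simp add: inner_diff_right)
      finally show ?thesis using f1 f2 True by (simp add: V_def r_def v_def g_def)
    next
      case False
      thus ?thesis using B by (simp add: V_def r_def)
    qed
  qed
  define t where "t = (\<lambda>\<omega>. if norm (X \<omega>) \<le> R then 0 else u \<omega> * (B - f (X \<omega>)))"
  define s where "s = (\<lambda>\<omega>. if norm (X \<omega>) \<le> R then u \<omega> else 0)"
  have um: "u \<in> borel_measurable M" using ui by simp
  have ti: "integrable M t"
  proof (rule Bochner_Integration.integrable_bound[OF uBi])
    show "t \<in> borel_measurable M" unfolding t_def using Xm um fXm by measurable
    show "AE \<omega> in M. norm (t \<omega>) \<le> norm (u \<omega> * (B - f (X \<omega>)))" by (auto simp: t_def)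
  qed
  have si: "integrable M s"
  proof (rule Bochner_Integration.integrable_bound[OF ui])
    show "s \<in> borel_measurable M" unfolding s_def using Xm um by measurable
    show "AE \<omega> in M. norm (s \<omega>) \<le> norm (u \<omega>)" by (auto simp: s_def)
  qed
  have ur: "(\<lambda>\<omega>. u \<omega> * r \<omega>) = (\<lambda>\<omega>. 2 * e1 * s \<omega> + t \<omega>)"
    by (auto simp: r_def s_def t_def)
  have uri: "integrable M (\<lambda>\<omega>. u \<omega> * r \<omega>)" unfolding ur using si ti by simp
  have I: "(\<integral>\<omega>. u \<omega> * r \<omega> \<partial>M) = 2 * e1 * (\<integral>\<omega>. s \<omega> \<partial>M) + (\<integral>\<omega>. t \<omega> \<partial>M)"
    unfolding ur using si ti by simp
  have sU: "(\<integral>\<omega>. s \<omega> \<partial>M) \<le> U"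
    unfolding U_def using si ui u0 by (intro integral_mono) (auto simp: s_def)
  hence sU2: "2 * e1 * (\<integral>\<omega>. s \<omega> \<partial>M) \<le> 2 * e1 * U" using e1 by simp
  have tl: "(\<integral>\<omega>. t \<omega> \<partial>M) < \<eta> / 2" using Rt by (simp add: t_def)
  have eU: "2 * e1 * U < \<eta> / 2"
  proof -
    have "2 * e1 * U = \<eta> / 2 * (U / (U + 1))" using U0 by (simp add: e1_def field_simps)
    also have "\<dots> < \<eta> / 2 * 1" using U0 \<eta> by (intro mult_strict_left_mono) auto
    finally show ?thesis by simp
  qed
  have "(\<integral>\<omega>. u \<omega> * r \<omega> \<partial>M) < \<eta>" using I sU2 tl eU by linarith
  show ?thesis
    using Vm VL uri maj \<open>(\<integral>\<omega>. u \<omega> * r \<omega> \<partial>M) < \<eta>\<close> by blast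
qed

end


theorem lemma6p2:
  fixes M :: "'a measure" and p :: ennreal and f :: "real^'n \<Rightarrow> real"
  assumes "prob_space M"
    and "1 \<le> p"
    and "aggregation_function M p f"
  shows "(concave_on UNIV f \<and> (\<exists>B. \<forall>x. f x \<le> B) \<longrightarrow>
            Lp_concave M p (induced f) \<and> Lp_lower_demicontinuous M p (induced f))
       \<and> (linear f \<longrightarrow>
            Lp_linear M p (induced f) \<and> Lp_lower_demicontinuous M p (induced f))
       \<and> (regularly_increasing_fun f \<longrightarrow> Lp_regularly_increasing M p (induced f))"
proof -
  interpret prob_space M by fact
  have p: "1 \<le> p" by fact
  have agg: "\<forall>X. memLp M p X \<longrightarrow> memLp M p (\<lambda>\<omega>. f (X \<omega>))"
    using assms(3) by (simp add: aggregation_function_def)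
  have part1: "Lp_concave M p (induced f) \<and> Lp_lower_demicontinuous M p (induced f)"
    if h: "concave_on UNIV f \<and> (\<exists>B. \<forall>x. f x \<le> B)"
  proof
    obtain B where conc: "concave_on UNIV f" and B: "\<forall>x. f x \<le> B" using h by blast
    show "Lp_concave M p (induced f)"
      unfolding Lp_concave_def induced_def
    proof (intro allI impI AE_I2)
      fix X1 X2 :: "'a \<Rightarrow> real^'n" and t :: real and \<omega>
      assume "memLp M p X1 \<and> memLp M p X2 \<and> 0 < t \<and> t < 1"
      hence t: "0 \<le> t" "0 \<le> 1 - t" "t + (1 - t) = 1" by auto
      have "- f (t *\<^sub>R X1 \<omega> + (1 - t) *\<^sub>R X2 \<omega>) \<le> t * (- f (X1 \<omega>)) + (1 - t) * (- f (X2 \<omega>))"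
        using conc t unfolding concave_on_def convex_on_def by blast
      thus "t * f (X1 \<omega>) + (1 - t) * f (X2 \<omega>) \<le> f (t *\<^sub>R X1 \<omega> + (1 - t) *\<^sub>R X2 \<omega>)" by simp
    qed
    show "Lp_lower_demicontinuous M p (induced f)"
    proof (rule demicont_from_usc[OF p agg])
      fix u :: "'a \<Rightarrow> real" and X :: "'a \<Rightarrow> real^'n" and a :: real
      assume u: "memLp M (conj_exp p) u" and u0: "\<forall>\<omega>. 0 \<le> u \<omega>" and X: "memLp M p X" and a: "0 < a"
      have ui: "integrable M u" using memLp_integrable[OF conj_exp_ge1[OF p] u] .
      have fX: "memLp M p (\<lambda>\<omega>. f (X \<omega>))" using agg X by blast
      have Bc: "memLp M p (\<lambda>\<omega>. B)" by (rule memLp_bounded[of _ "\<bar>B\<bar>"]) auto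
      have uBi: "integrable M (\<lambda>\<omega>. u \<omega> * (B - f (X \<omega>)))"
        using holder_integrable[OF p u memLp_diff[OF Bc fX]] .
      have Xm: "X \<in> borel_measurable M" using X by (simp add: memLp_def)
      have a2: "0 < a / 2" using a by simp
      obtain V L r where Vm: "V \<in> borel_measurable M" and VL: "\<forall>\<omega>. norm (V \<omega>) \<le> L"
        and ri: "integrable M (\<lambda>\<omega>. u \<omega> * r \<omega>)"
        and maj: "\<forall>\<omega> y. f y \<le> f (X \<omega>) + V \<omega> \<bullet> (y - X \<omega>) + r \<omega>"
        and rl: "(\<integral>\<omega>. u \<omega> * r \<omega> \<partial>M) < a / 2"
        using concave_majorant[OF conc B Xm u0 ui uBi a2] by blast
      show "nbhd M p X (\<lambda>Y. (\<integral>\<omega>. u \<omega> * (f (Y \<omega>) - f (X \<omega>)) \<partial>M) < a)"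
        by (rule usc_majorant[OF p agg X u u0 Vm VL ri maj rl a])
    qed
  qed
  have part2: "Lp_linear M p (induced f) \<and> Lp_lower_demicontinuous M p (induced f)"
    if lin: "linear f"
  proof
    show "Lp_linear M p (induced f)"
      unfolding Lp_linear_def induced_def
      by (intro allI impI AE_I2) (simp add: linear_add[OF lin] linear_scale[OF lin])
    show "Lp_lower_demicontinuous M p (induced f)"
      by (rule demicont_from_usc[OF p agg]) (rule linear_usc[OF lin p agg])
  qed
  have part3: "Lp_regularly_increasing M p (induced f)" if "regularly_increasing_fun f"
    by (rule Lp_regularly_increasing_induced[OF that p agg])
  show ?thesis using part1 part2 part3 by blast
qed

end
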